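(* Let $M=([n],\mathscr C)$ be a matroid. Then $M$ has a unique minimal tropical basis if and only if $B_M$ is a tropical basis.
   Context: Let ${\bf TP}^{n-1}$ be the tropical projective space over $(\mathbb R\cup\{-\infty\},\max,+)$. For a circuit $C$, $V(C)$ is the set of $x\in{\bf TP}^{n-1}$ such that $\max\{x_i:i\in C\}$ is attained at least twice. For $B\subseteq\mathscr C$, set $V(B)=\bigcap_{C\in B}V(C)$. A subset $B\subseteq\mathscr C$ is a tropical basis if $V(B)=V(\mathscr C)$. It is a minimal tropical basis if no proper subset of it is a tropical basis. $B_M$ denotes the intersection of all tropical bases of $M$. *)

theory Defs
  imports Main "HOL-Library.Extended_Real"
begin

definition matroid_circuits :: "nat \<Rightarrow> nat set set \<Rightarrow> bool" where
  "matroid_circuits n \<C> \<longleftrightarrow>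
     (\<forall>C\<in>\<C>. C \<subseteq> {1..n}) \<and>
     {} \<notin> \<C> \<and>
     (\<forall>C1\<in>\<C>. \<forall>C2\<in>\<C>. C1 \<subseteq> C2 \<longrightarrow> C1 = C2) \<and>
     (\<forall>C1\<in>\<C>. \<forall>C2\<in>\<C>. \<forall>e. C1 \<noteq> C2 \<and> e \<in> C1 \<inter> C2 \<longrightarrow>
        (\<exists>C3\<in>\<C>. C3 \<subseteq> (C1 \<union> C2) - {e}))"

text \<open>Representatives of points of TP^{n-1}: vectors indexed by {1..n} with entries in
  R \<union> {-\<infinity>}, not all -\<infinity> (other coordinates fixed to -\<infinity>).  All sets V(C) are
  invariant under tropical scaling, so working with representatives is harmless.\<close>
definition TP :: "nat \<Rightarrow> (nat \<Rightarrow> ereal) set" where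
  "TP n = {x. (\<forall>i. x i \<noteq> \<infinity>) \<and> (\<forall>i. i \<notin> {1..n} \<longrightarrow> x i = -\<infinity>) \<and>
             (\<exists>i\<in>{1..n}. x i \<noteq> -\<infinity>)}"

definition tropV :: "nat \<Rightarrow> nat set \<Rightarrow> (nat \<Rightarrow> ereal) set" where
  "tropV n C = {x \<in> TP n. \<exists>i\<in>C. \<exists>j\<in>C. i \<noteq> j \<and>
                   x i = Max (x ` C) \<and> x j = Max (x ` C)}"

definition tropVset :: "nat \<Rightarrow> nat set set \<Rightarrow> (nat \<Rightarrow> ereal) set" where
  "tropVset n B = TP n \<inter> (\<Inter>C\<in>B. tropV n C)"

definition tropical_basis :: "nat \<Rightarrow> nat set set \<Rightarrow> nat set set \<Rightarrow> bool" where
  "tropical_basis n \<C> B \<longleftrightarrow> B \<subseteq> \<C> \<and> tropVset n B = tropVset n \<C>"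

definition minimal_tropical_basis :: "nat \<Rightarrow> nat set set \<Rightarrow> nat set set \<Rightarrow> bool" where
  "minimal_tropical_basis n \<C> B \<longleftrightarrow> tropical_basis n \<C> B \<and>
     (\<forall>B'. B' \<subset> B \<longrightarrow> \<not> tropical_basis n \<C> B')"

text \<open>B_M: intersection of all tropical bases (a nonempty family, since \<C> itself is one).\<close>
definition BM :: "nat \<Rightarrow> nat set set \<Rightarrow> nat set set" where
  "BM n \<C> = \<Inter>{B. tropical_basis n \<C> B}"

end

theory Submission
  imports Defs
begin

lemma min_sub_aux:
  "\<forall>B. finite B \<and> card B = k \<and> P B \<longrightarrow> (\<exists>B'\<subseteq>B. P B' \<and> (\<forall>B''. B'' \<subset> B' \<longrightarrow> \<not> P B''))"
proof (induction k rule: less_induct)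
  case (less k)
  show ?case
  proof (intro allI impI)
    fix B assume h: "finite B \<and> card B = k \<and> P B"
    show "\<exists>B'\<subseteq>B. P B' \<and> (\<forall>B''. B'' \<subset> B' \<longrightarrow> \<not> P B'')"
    proof (cases "\<forall>B''. B'' \<subset> B \<longrightarrow> \<not> P B''")
      case True then show ?thesis using h by blast
    next
      case False
      then obtain B'' where b: "B'' \<subset> B" "P B''" by blast
      have "card B'' < k" using b h psubset_card_mono by blast
      moreover have "finite B''" using b h finite_subset by blast
      ultimately obtain B' where "B' \<subseteq> B''" "P B'" "\<forall>B''. B'' \<subset> B' \<longrightarrow> \<not> P B''"
        using less.IH[OF \<open>card B'' < k\<close>] b(2) by auto
      then show ?thesis using b by blast
    qed
  qed
qed

lemma min_sub:
  assumes "finite B" "P B"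
  shows "\<exists>B'\<subseteq>B. P B' \<and> (\<forall>B''. B'' \<subset> B' \<longrightarrow> \<not> P B'')"
  using min_sub_aux[of "card B" P] assms by simp

theorem lemma2:
  fixes n :: nat and \<C> :: "nat set set"
  assumes "matroid_circuits n \<C>"
  shows "(\<exists>!B. minimal_tropical_basis n \<C> B) \<longleftrightarrow> tropical_basis n \<C> (BM n \<C>)"
proof -
  have finC: "finite \<C>"
  proof -
    have "\<forall>C\<in>\<C>. C \<subseteq> {1..n}" using assms unfolding matroid_circuits_def by simp
    then have "\<C> \<subseteq> Pow {1..n}" by blast
    then show ?thesis using finite_subset by blast
  qed
  have Cb: "tropical_basis n \<C> \<C>" unfolding tropical_basis_def by simp
  have BMsub: "\<And>B. tropical_basis n \<C> B \<Longrightarrow> BM n \<C> \<subseteq> B" unfolding BM_def by blast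
  have ex_min: "\<And>B. tropical_basis n \<C> B \<Longrightarrow> \<exists>B'\<subseteq>B. minimal_tropical_basis n \<C> B'"
  proof -
    fix B assume b: "tropical_basis n \<C> B"
    have "finite B" using b finC finite_subset unfolding tropical_basis_def by blast
    from min_sub[OF this, of "tropical_basis n \<C>", OF b]
    show "\<exists>B'\<subseteq>B. minimal_tropical_basis n \<C> B'" unfolding minimal_tropical_basis_def by simp
  qed
  show ?thesis
  proof
    assume "\<exists>!B. minimal_tropical_basis n \<C> B"
    then obtain B0 where b0: "minimal_tropical_basis n \<C> B0"
      and u: "\<And>B. minimal_tropical_basis n \<C> B \<Longrightarrow> B = B0" by blast
    have "B0 \<subseteq> BM n \<C>" unfolding BM_def
    proof (rule Inter_greatest)
      fix B assume "B \<in> {B. tropical_basis n \<C> B}"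
      then obtain B' where "B' \<subseteq> B" "minimal_tropical_basis n \<C> B'" using ex_min by blast
      then show "B0 \<subseteq> B" using u by blast
    qed
    moreover have "BM n \<C> \<subseteq> B0" using BMsub b0 unfolding minimal_tropical_basis_def by blast
    ultimately show "tropical_basis n \<C> (BM n \<C>)" using b0 unfolding minimal_tropical_basis_def by auto
  next
    assume bm: "tropical_basis n \<C> (BM n \<C>)"
    have m: "minimal_tropical_basis n \<C> (BM n \<C>)"
      unfolding minimal_tropical_basis_def using bm BMsub by blast
    show "\<exists>!B. minimal_tropical_basis n \<C> B"
    proof (rule ex1I[where P="minimal_tropical_basis n \<C>", OF m])
      fix B assume b: "minimal_tropical_basis n \<C> B"
      then have "BM n \<C> \<subseteq> B" using BMsub unfolding minimal_tropical_basis_def by blast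
      then show "B = BM n \<C>" using b bm unfolding minimal_tropical_basis_def by blast
    qed
  qed
qed

end
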